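(* Let $\beta$ be a basis set in the variables $x_1,x_2,x_3$, and for each pair $(i,j)\in\{(1,2),(1,3),(2,3)\}$ let $G(i,j)$ be the set of minimal generators of $I_\beta$ that involve only variables in $\{x_i,x_j\}$. If $|G(i,j)|>2$ for all three pairs $(i,j)$, then there exists a non-standard arrow for $\beta$ that is not translation-equivalent to $0$; consequently $\beta$ is not smooth.
   Context: $k$ is an algebraically closed field; monomials are identified with exponent vectors. A basis set is a finite nonempty set $\beta$ of monomials closed under taking divisors; $I_\beta$ is the ideal generated by monomials not in $\beta$; $\beta$ is smooth if the point corresponding to $I_\beta$ is a nonsingular point of the Hilbert scheme of $|\beta|$ points of $\mathbb A^3_k$. An arrow is a pair $(\mathbf d,\mathbf j)$ with tail $\mathbf x^{\mathbf d}\notin\beta$ and head $\mathbf x^{\mathbf j}\in\beta$; it is standard if the vector $\mathbf j-\mathbf d$ has exactly one negative component, non-standard otherwise. A translation step replaces $(\mathbf d,\mathbf j)$ by $(\mathbf d\pm e_i,\mathbf j\pm e_i)$ provided the result is again an arrow; $\sim$ is the generated equivalence relation. An arrow $c$ is translation-equivalent to $0$ if $c\sim(\mathbf d',\mathbf j')$ with, for some $i$, $j'_i=0$, $d'_i\ge1$ and $\mathbf x^{\mathbf d'-e_i}\notin\beta$. *)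

theory Defs
  imports "HOL-Library.Numeral_Type"
begin

text \<open>Monomials in x1,x2,x3 are identified with exponent vectors, i.e. functions
  from the three-element index type 3 to nat. Divisibility is the pointwise order.\<close>
type_synonym mon = "3 \<Rightarrow> nat"

definition basis_set :: "mon set \<Rightarrow> bool" where
  "basis_set \<beta> \<longleftrightarrow> finite \<beta> \<and> \<beta> \<noteq> {} \<and> (\<forall>m\<in>\<beta>. \<forall>m'. m' \<le> m \<longrightarrow> m' \<in> \<beta>)"

text \<open>Minimal generators of the monomial ideal I_beta generated by the monomials
  not in beta: the divisibility-minimal monomials outside beta.\<close>
definition min_gens :: "mon set \<Rightarrow> mon set" where
  "min_gens \<beta> = {m. m \<notin> \<beta> \<and> (\<forall>m'. m' \<le> m \<and> m' \<noteq> m \<longrightarrow> m' \<in> \<beta>)}"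

definition G :: "mon set \<Rightarrow> 3 \<Rightarrow> 3 \<Rightarrow> mon set" where
  "G \<beta> i j = {m \<in> min_gens \<beta>. \<forall>k. k \<noteq> i \<and> k \<noteq> j \<longrightarrow> m k = 0}"

type_synonym arrow = "mon \<times> mon"

definition is_arrow :: "mon set \<Rightarrow> arrow \<Rightarrow> bool" where
  "is_arrow \<beta> c \<longleftrightarrow> fst c \<notin> \<beta> \<and> snd c \<in> \<beta>"

definition standard_arrow :: "arrow \<Rightarrow> bool" where
  "standard_arrow c \<longleftrightarrow> card {i. snd c i < fst c i} = 1"

definition translation_step :: "mon set \<Rightarrow> arrow \<Rightarrow> arrow \<Rightarrow> bool" where
  "translation_step \<beta> c c' \<longleftrightarrow> is_arrow \<beta> c \<and> is_arrow \<beta> c' \<and>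
     (\<exists>i. c' = ((fst c)(i := fst c i + 1), (snd c)(i := snd c i + 1))
        \<or> (fst c i \<ge> 1 \<and> snd c i \<ge> 1 \<and>
           c' = ((fst c)(i := fst c i - 1), (snd c)(i := snd c i - 1))))"

definition translation_equiv :: "mon set \<Rightarrow> arrow \<Rightarrow> arrow \<Rightarrow> bool" where
  "translation_equiv \<beta> = (\<lambda>c c'. translation_step \<beta> c c' \<or> translation_step \<beta> c' c)\<^sup>*\<^sup>*"

definition trans_equiv_zero :: "mon set \<Rightarrow> arrow \<Rightarrow> bool" where
  "trans_equiv_zero \<beta> c \<longleftrightarrow> (\<exists>d' j'. translation_equiv \<beta> c (d', j') \<and>
     (\<exists>i. j' i = 0 \<and> d' i \<ge> 1 \<and> d'(i := d' i - 1) \<notin> \<beta>))"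

end

theory Submission
  imports Defs
begin


definition dn :: "(nat \<times> nat) set \<Rightarrow> bool" where
  "dn S \<longleftrightarrow> (\<forall>x y x' y'. (x,y) \<in> S \<longrightarrow> x' \<le> x \<longrightarrow> y' \<le> y \<longrightarrow> (x',y') \<in> S)"

lemma dnD: "dn S \<Longrightarrow> (x,y) \<in> S \<Longrightarrow> x' \<le> x \<Longrightarrow> y' \<le> y \<Longrightarrow> (x',y') \<in> S"
  unfolding dn_def by blast

lemma two_d:
  assumes dD: "dn D" and dE: "dn E" and fD: "finite D" and D0: "(0,0) \<in> D"
    and g1: "a0 \<ge> 1" and g2: "b0 \<ge> 1" and g3: "(a0,b0) \<notin> E"
    and g4: "(a0-1,b0) \<in> E" and g5: "(a0,b0-1) \<in> E"
    and axY: "\<forall>y. (0,y) \<in> D \<longrightarrow> (0,y+1) \<in> E"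
    and axX: "\<forall>x. (x,0) \<in> D \<longrightarrow> (x+1,0) \<in> E"
  shows "\<exists>s1 s2 k1 k2 u1 u2. s1 \<ge> 1 \<and> s2 \<ge> 1 \<and> (u1,u2) \<in> D \<and> k1 \<le> u1 \<and> k2 \<le> u2
     \<and> (u1+s1,u2+s2) \<notin> E
     \<and> (\<forall>x y. (x,y) \<in> D \<longrightarrow> k2 \<le> y \<longrightarrow> x = k1 \<longrightarrow> (x+s1,y+s2) \<notin> E \<longrightarrow> (x+s1-1,y+s2) \<in> E)
     \<and> (\<forall>x y. (x,y) \<in> D \<longrightarrow> k1 \<le> x \<longrightarrow> y = k2 \<longrightarrow> (x+s1,y+s2) \<notin> E \<longrightarrow> (x+s1,y+s2-1) \<in> E)"
proof (cases "\<exists>x y. (x,y) \<in> D \<and> (x+1,y+1) \<notin> E")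
  case True
  then obtain x y where xy: "(x,y) \<in> D" "(x+1,y+1) \<notin> E" by blast
  show ?thesis
    apply (rule exI[of _ 1], rule exI[of _ 1], rule exI[of _ 0], rule exI[of _ 0], rule exI[of _ x], rule exI[of _ y])
    using xy axX axY by auto
next
  case False
  hence c2: "\<And>x y. (x,y) \<in> D \<Longrightarrow> (x+1,y+1) \<in> E" by blast
  define pr where "pr a b k1 k2 \<longleftrightarrow> (a,b) \<notin> E \<and> (a-1,b) \<in> E \<and> (a,b-1) \<in> E \<and> (k1,k2) \<in> D \<and> k1 < a \<and> k2 < b"
    for a b k1 k2
  define M where "M = {p \<in> D. \<exists>a b. pr a b (fst p) (snd p)}"
  have fM: "finite M" using fD unfolding M_def by auto
  have M0: "(0,0) \<in> M" unfolding M_def pr_def using D0 g1 g2 g3 g4 g5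
    apply simp apply (rule exI[of _ a0], rule exI[of _ b0]) by simp
  define f where "f = (\<lambda>p::nat\<times>nat. fst p + snd p)"
  have "Max (f ` M) \<in> f ` M" using fM M0 by (intro Max_in) auto
  then obtain p where pM: "p \<in> M" and pmax: "f p = Max (f ` M)" by auto
  have best: "\<And>a b k1 k2. pr a b k1 k2 \<Longrightarrow> k1 + k2 \<le> fst p + snd p"
  proof -
    fix a b k1 k2 assume "pr a b k1 k2"
    hence "(k1,k2) \<in> M" unfolding M_def pr_def by auto
    hence "f (k1,k2) \<le> Max (f ` M)" using fM by (intro Max_ge) auto
    thus "k1 + k2 \<le> fst p + snd p" using pmax unfolding f_def by simp
  qed
  obtain k1 k2 where p: "p = (k1,k2)" by (cases p)
  from pM obtain a b where pab: "pr a b k1 k2" unfolding M_def p by auto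
  hence ab: "(a,b) \<notin> E" "(a-1,b) \<in> E" "(a,b-1) \<in> E" "(k1,k2) \<in> D" "k1 < a" "k2 < b"
    unfolding pr_def by auto
  have best': "\<And>a b k1' k2'. pr a b k1' k2' \<Longrightarrow> k1' + k2' \<le> k1 + k2" using best p by fastforce
  define s1 where "s1 = a - k1"
  define s2 where "s2 = b - k2"
  have R1: "\<forall>x y. (x,y) \<in> D \<longrightarrow> k2 \<le> y \<longrightarrow> x = k1 \<longrightarrow> (x+s1,y+s2) \<notin> E \<longrightarrow> (x+s1-1,y+s2) \<in> E"
  proof (intro allI impI)
    fix x y assume xy: "(x,y) \<in> D" "k2 \<le> y" "x = k1" "(x+s1,y+s2) \<notin> E"
    have xs: "x + s1 = a" using xy ab unfolding s1_def by simp
    show "(x+s1-1,y+s2) \<in> E"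
    proof (cases "y = k2")
      case True
      then show ?thesis using xs ab unfolding s2_def by simp
    next
      case False
      hence yk: "k2 < y" using xy by simp
      have D1: "(k1,k2+1) \<in> D" using dnD[OF dD xy(1)] xy yk by simp
      have kb: "k2 + 1 = b"
      proof (rule ccontr)
        assume "k2 + 1 \<noteq> b"
        hence "pr a b k1 (k2+1)" using ab D1 unfolding pr_def by auto
        thus False using best' by fastforce
      qed
      have ys: "y + s2 = y + 1" using kb unfolding s2_def by simp
      have ka: "k1 + 1 < a"
      proof (rule ccontr)
        assume "\<not> k1 + 1 < a"
        hence "k1 + 1 = a" using ab by simp
        thus False using c2[OF ab(4)] kb ab(1) by simp
      qed
      show ?thesis
      proof (rule ccontr)
        assume nE: "(x + s1 - 1, y + s2) \<notin> E"
        hence nE': "(a-1, y+1) \<notin> E" using xs ys by simp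
        define y0 where "y0 = (LEAST t. (a-1,t) \<notin> E)"
        have y0a: "(a-1,y0) \<notin> E" unfolding y0_def by (rule LeastI[of _ "y+1"]) (rule nE')
        have y0b: "y0 \<le> y+1" unfolding y0_def by (rule Least_le) (rule nE')
        have y0c: "\<And>t. t < y0 \<Longrightarrow> (a-1,t) \<in> E" unfolding y0_def using not_less_Least by blast
        have by0: "b < y0"
        proof (rule ccontr)
          assume "\<not> b < y0"
          hence "(a-1,y0) \<in> E" using dnD[OF dE ab(2)] by simp
          thus False using y0a by simp
        qed
        have Dk: "(k1, y0-1) \<in> D" using dnD[OF dD xy(1)] xy y0b by simp
        have Ek: "(k1+1, y0) \<in> E" using c2[OF Dk] by0 by simp
        define x0 where "x0 = (LEAST t. (t,y0) \<notin> E)"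
        have x0a: "(x0,y0) \<notin> E" unfolding x0_def by (rule LeastI[of _ "a-1"]) (rule y0a)
        have x0b: "x0 \<le> a-1" unfolding x0_def by (rule Least_le) (rule y0a)
        have x0c: "\<And>t. t < x0 \<Longrightarrow> (t,y0) \<in> E" unfolding x0_def using not_less_Least by blast
        have kx0: "k1 + 1 < x0"
        proof (rule ccontr)
          assume "\<not> k1 + 1 < x0"
          hence "(x0,y0) \<in> E" using dnD[OF dE Ek] by simp
          thus False using x0a by simp
        qed
        have e1: "(x0-1,y0) \<in> E" using x0c kx0 by simp
        have e2: "(a-1,y0-1) \<in> E" using y0c by0 by simp
        have e3: "(x0,y0-1) \<in> E" using dnD[OF dE e2] x0b by simp
        have "pr x0 y0 k1 (y0-1)" unfolding pr_def using x0a e1 e3 Dk kx0 by0 by auto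
        hence "k1 + (y0-1) \<le> k1 + k2" by (rule best')
        thus False using by0 ab by simp
      qed
    qed
  qed
  have R2: "\<forall>x y. (x,y) \<in> D \<longrightarrow> k1 \<le> x \<longrightarrow> y = k2 \<longrightarrow> (x+s1,y+s2) \<notin> E \<longrightarrow> (x+s1,y+s2-1) \<in> E"
  proof (intro allI impI)
    fix x y assume xy: "(x,y) \<in> D" "k1 \<le> x" "y = k2" "(x+s1,y+s2) \<notin> E"
    have ys: "y + s2 = b" using xy ab unfolding s2_def by simp
    show "(x+s1,y+s2-1) \<in> E"
    proof (cases "x = k1")
      case True
      then show ?thesis using ys ab unfolding s1_def by simp
    next
      case False
      hence xk: "k1 < x" using xy by simp
      have D1: "(k1+1,k2) \<in> D" using dnD[OF dD xy(1)] xy xk by simp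
      have ka: "k1 + 1 = a"
      proof (rule ccontr)
        assume "k1 + 1 \<noteq> a"
        hence "pr a b (k1+1) k2" using ab D1 unfolding pr_def by auto
        thus False using best' by fastforce
      qed
      have xs: "x + s1 = x + 1" using ka unfolding s1_def by simp
      have kb: "k2 + 1 < b"
      proof (rule ccontr)
        assume "\<not> k2 + 1 < b"
        hence "k2 + 1 = b" using ab by simp
        thus False using c2[OF ab(4)] ka ab(1) by simp
      qed
      show ?thesis
      proof (rule ccontr)
        assume nE: "(x + s1, y + s2 - 1) \<notin> E"
        hence nE': "(x+1, b-1) \<notin> E" using xs ys by simp
        define x0 where "x0 = (LEAST t. (t,b-1) \<notin> E)"
        have x0a: "(x0,b-1) \<notin> E" unfolding x0_def by (rule LeastI[of _ "x+1"]) (rule nE')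
        have x0b: "x0 \<le> x+1" unfolding x0_def by (rule Least_le) (rule nE')
        have x0c: "\<And>t. t < x0 \<Longrightarrow> (t,b-1) \<in> E" unfolding x0_def using not_less_Least by blast
        have ax0: "a < x0"
        proof (rule ccontr)
          assume "\<not> a < x0"
          hence "(x0,b-1) \<in> E" using dnD[OF dE ab(3)] by simp
          thus False using x0a by simp
        qed
        have Dk: "(x0-1, k2) \<in> D" using dnD[OF dD xy(1)] xy x0b by simp
        have Ek: "(x0, k2+1) \<in> E" using c2[OF Dk] ax0 by simp
        define y0 where "y0 = (LEAST t. (x0,t) \<notin> E)"
        have y0a: "(x0,y0) \<notin> E" unfolding y0_def by (rule LeastI[of _ "b-1"]) (rule x0a)
        have y0b: "y0 \<le> b-1" unfolding y0_def by (rule Least_le) (rule x0a)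
        have y0c: "\<And>t. t < y0 \<Longrightarrow> (x0,t) \<in> E" unfolding y0_def using not_less_Least by blast
        have ky0: "k2 + 1 < y0"
        proof (rule ccontr)
          assume "\<not> k2 + 1 < y0"
          hence "(x0,y0) \<in> E" using dnD[OF dE Ek] by simp
          thus False using y0a by simp
        qed
        have e1: "(x0,y0-1) \<in> E" using y0c ky0 by simp
        have e2: "(x0-1,b-1) \<in> E" using x0c ax0 by simp
        have e3: "(x0-1,y0) \<in> E" using dnD[OF dE e2] y0b by simp
        have "pr x0 y0 (x0-1) k2" unfolding pr_def using y0a e1 e3 Dk ky0 ax0 by auto
        hence "(x0-1) + k2 \<le> k1 + k2" by (rule best')
        thus False using ax0 ab by simp
      qed
    qed
  qed
  show ?thesis
    apply (rule exI[of _ s1], rule exI[of _ s2], rule exI[of _ k1], rule exI[of _ k2], rule exI[of _ k1], rule exI[of _ k2])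
    using R1 R2 ab unfolding s1_def s2_def by auto
qed



lemma UNIV3: "(UNIV :: 3 set) = {0,1,2}"
proof -
  have "card {0,1,2::3} = 3" by simp
  moreover have "card (UNIV::3 set) = 3" by simp
  ultimately show ?thesis
    by (metis card_subset_eq finite subset_UNIV)
qed

lemma ex3: "(i::3) = 0 \<or> i = 1 \<or> i = 2" using UNIV3 by blast

definition mk :: "nat \<Rightarrow> nat \<Rightarrow> nat \<Rightarrow> mon" where
  "mk x y z = (\<lambda>i. if i = 0 then x else if i = 1 then y else z)"

lemma mk_app[simp]: "mk x y z 0 = x" "mk x y z 1 = y" "mk x y z 2 = z"
  unfolding mk_def by simp_all

lemma mk_eta: "m = mk (m 0) (m 1) (m 2)"
proof
  fix i :: 3 show "m i = mk (m 0) (m 1) (m 2) i" using ex3[of i] by auto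
qed

lemma mk_le: "mk x y z \<le> mk x' y' z' \<longleftrightarrow> x \<le> x' \<and> y \<le> y' \<and> z \<le> z'"
proof
  assume "mk x y z \<le> mk x' y' z'"
  hence "\<And>i. mk x y z i \<le> mk x' y' z' i" by (simp add: le_fun_def)
  from this[of 0] this[of 1] this[of 2] show "x \<le> x' \<and> y \<le> y' \<and> z \<le> z'" by simp
next
  assume "x \<le> x' \<and> y \<le> y' \<and> z \<le> z'"
  thus "mk x y z \<le> mk x' y' z'" unfolding le_fun_def using ex3 by (metis mk_app)
qed

definition adj :: "arrow \<Rightarrow> arrow \<Rightarrow> bool" where
  "adj p q \<longleftrightarrow> (\<exists>i. (\<forall>l. l \<noteq> i \<longrightarrow> fst q l = fst p l \<and> snd q l = snd p l) \<and>
     ((fst q i = fst p i + 1 \<and> snd q i = snd p i + 1) \<or> (fst p i = fst q i + 1 \<and> snd p i = snd q i + 1)))"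

lemma adj_sym: "adj p q \<Longrightarrow> adj q p"
  unfolding adj_def by metis

lemma step_adj: "translation_step \<beta> p q \<Longrightarrow> adj p q \<and> is_arrow \<beta> q"
  unfolding translation_step_def adj_def
  apply (elim conjE exE disjE)
  apply (rule conjI, rule exI, auto)[1]
  apply (rule conjI, rule_tac x=i in exI, auto)[1]
  done

lemma three_d:
  assumes bs: "basis_set \<beta>"
    and top: "\<forall>x y. mk x y (Suc C) \<notin> \<beta>"
    and s: "s1 \<ge> 1" "s2 \<ge> 1"
    and u: "mk u1 u2 C \<in> \<beta>" "k1 \<le> u1" "k2 \<le> u2" "mk (u1+s1) (u2+s2) 0 \<notin> \<beta>"
    and R1: "\<forall>x y. mk x y C \<in> \<beta> \<longrightarrow> k2 \<le> y \<longrightarrow> x = k1 \<longrightarrow> mk (x+s1) (y+s2) 0 \<notin> \<beta> \<longrightarrow> mk (x+s1-1) (y+s2) 0 \<in> \<beta>"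
    and R2: "\<forall>x y. mk x y C \<in> \<beta> \<longrightarrow> k1 \<le> x \<longrightarrow> y = k2 \<longrightarrow> mk (x+s1) (y+s2) 0 \<notin> \<beta> \<longrightarrow> mk (x+s1) (y+s2-1) 0 \<in> \<beta>"
  shows "\<exists>c. is_arrow \<beta> c \<and> \<not> standard_arrow c \<and> \<not> trans_equiv_zero \<beta> c"
proof -
  define c where "c = (mk (u1+s1) (u2+s2) 0, mk u1 u2 C)"
  define Inv where "Inv p \<longleftrightarrow> (\<exists>x y. mk x y C \<in> \<beta> \<and> k1 \<le> x \<and> k2 \<le> y \<and> mk (x+s1) (y+s2) 0 \<notin> \<beta>
      \<and> p = (mk (x+s1) (y+s2) 0, mk x y C))" for p
  have pres: "Inv q" if "Inv p" "adj p q" "is_arrow \<beta> q" for p q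
  proof -
    from that(1) obtain x y where xy: "mk x y C \<in> \<beta>" "k1 \<le> x" "k2 \<le> y" "mk (x+s1) (y+s2) 0 \<notin> \<beta>"
      and p: "p = (mk (x+s1) (y+s2) 0, mk x y C)" unfolding Inv_def by blast
    from that(2) obtain i where oth: "\<forall>l. l \<noteq> i \<longrightarrow> fst q l = fst p l \<and> snd q l = snd p l"
      and ch: "(fst q i = fst p i + 1 \<and> snd q i = snd p i + 1) \<or> (fst p i = fst q i + 1 \<and> snd p i = snd q i + 1)"
      unfolding adj_def by blast
    have qa: "fst q \<notin> \<beta>" "snd q \<in> \<beta>" using that(3) unfolding is_arrow_def by auto
    have q: "q = (mk (fst q 0) (fst q 1) (fst q 2), mk (snd q 0) (snd q 1) (snd q 2))"
      using mk_eta[of "fst q"] mk_eta[of "snd q"] by (metis prod.collapse)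
    have n01: "(0::3) \<noteq> 1" "(0::3) \<noteq> 2" "(1::3) \<noteq> 2" by simp_all
    consider "i = 0" | "i = 1" | "i = 2" using ex3 by blast
    then show ?thesis
    proof cases
      case 1
      have o: "fst q 1 = y + s2" "fst q 2 = 0" "snd q 1 = y" "snd q 2 = C"
        using oth[rule_format, of 1] oth[rule_format, of 2] n01 1 p by auto
      from ch consider "fst q 0 = x + s1 + 1" "snd q 0 = x + 1" | "x + s1 = fst q 0 + 1" "x = snd q 0 + 1"
        using 1 p by auto
      then show ?thesis
      proof cases
        case 1
        have "q = (mk (x+1+s1) (y+s2) 0, mk (x+1) y C)" using q o 1 by simp
        then show ?thesis unfolding Inv_def using qa xy by (intro exI[of _ "x+1"] exI[of _ y]) auto
      next
        case 2
        have qq: "q = (mk (x-1+s1) (y+s2) 0, mk (x-1) y C)" using q o 2 by simp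
        show ?thesis
        proof (cases "x = k1")
          case True
          have "mk (x+s1-1) (y+s2) 0 \<in> \<beta>" using R1 xy True by blast
          moreover have "x + s1 - 1 = x - 1 + s1" using 2 by simp
          ultimately show ?thesis using qa qq by simp
        next
          case False
          then show ?thesis unfolding Inv_def using qa qq xy by (intro exI[of _ "x-1"] exI[of _ y]) auto
        qed
      qed
    next
      case 2
      have o: "fst q 0 = x + s1" "fst q 2 = 0" "snd q 0 = x" "snd q 2 = C"
        using oth[rule_format, of 0] oth[rule_format, of 2] n01 2 p by auto
      from ch consider "fst q 1 = y + s2 + 1" "snd q 1 = y + 1" | "y + s2 = fst q 1 + 1" "y = snd q 1 + 1"
        using 2 p by auto
      then show ?thesis
      proof cases
        case 1
        have "q = (mk (x+s1) (y+1+s2) 0, mk x (y+1) C)" using q o 1 by simp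
        then show ?thesis unfolding Inv_def using qa xy by (intro exI[of _ x] exI[of _ "y+1"]) auto
      next
        case 2
        have qq: "q = (mk (x+s1) (y-1+s2) 0, mk x (y-1) C)" using q o 2 by simp
        show ?thesis
        proof (cases "y = k2")
          case True
          have "mk (x+s1) (y+s2-1) 0 \<in> \<beta>" using R2 xy True by blast
          moreover have "y + s2 - 1 = y - 1 + s2" using 2 by simp
          ultimately show ?thesis using qa qq by simp
        next
          case False
          then show ?thesis unfolding Inv_def using qa qq xy by (intro exI[of _ x] exI[of _ "y-1"]) auto
        qed
      qed
    next
      case 3
      have o: "fst q 0 = x + s1" "fst q 1 = y + s2" "snd q 0 = x" "snd q 1 = y"
        using oth[rule_format, of 0] oth[rule_format, of 1] n01 3 p by auto
      from ch consider "snd q 2 = C + 1" | "0 = fst q 2 + 1"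
        using 3 p by auto
      then show ?thesis
      proof cases
        case 1
        have "snd q = mk x y (Suc C)" using q o 1 by (metis Suc_eq_plus1 snd_conv)
        then show ?thesis using qa top by metis
      next
        case 2 then show ?thesis by simp
      qed
    qed
  qed
  have reach: "Inv q" if "translation_equiv \<beta> c q" for q
    using that unfolding translation_equiv_def
  proof (induction rule: rtranclp_induct)
    case base
    then show ?case unfolding Inv_def c_def using u by blast
  next
    case (step y z)
    from step.hyps(2) show ?case
    proof
      assume "translation_step \<beta> y z"
      then show ?thesis using pres[OF step.IH] step_adj by blast
    next
      assume "translation_step \<beta> z y"
      hence "adj z y" and "is_arrow \<beta> z" using step_adj unfolding translation_step_def by blast+
      then show ?thesis using pres[OF step.IH] adj_sym by blast
    qed
  qed
  have nz: "\<not> trans_equiv_zero \<beta> c"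
  proof
    assume "trans_equiv_zero \<beta> c"
    then obtain d' j' i where e: "translation_equiv \<beta> c (d', j')" and z: "j' i = 0" "d' i \<ge> 1"
      "d'(i := d' i - 1) \<notin> \<beta>" unfolding trans_equiv_zero_def by blast
    from reach[OF e] obtain x y where xy: "mk x y C \<in> \<beta>" "k1 \<le> x" "k2 \<le> y" "mk (x+s1) (y+s2) 0 \<notin> \<beta>"
      and dj: "d' = mk (x+s1) (y+s2) 0" "j' = mk x y C" unfolding Inv_def by blast
    consider "i = 0" | "i = 1" | "i = 2" using ex3 by blast
    then show False
    proof cases
      case 1
      have "d'(i := d' i - 1) = mk (x+s1-1) (y+s2) 0"
        using 1 dj by (auto simp: mk_def)
      moreover have "x = k1" using z 1 dj xy by simp
      ultimately show False using R1 xy z by auto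
    next
      case 2
      have "d'(i := d' i - 1) = mk (x+s1) (y+s2-1) 0"
        using 2 dj by (auto simp: mk_def)
      moreover have "y = k2" using z 2 dj xy by simp
      ultimately show False using R2 xy z by auto
    qed (use z dj in simp)
  qed
  have ar: "is_arrow \<beta> c" unfolding is_arrow_def c_def using u by simp
  have "{i. snd c i < fst c i} = {0,1}"
  proof (rule set_eqI)
    fix i :: 3
    show "i \<in> {i. snd c i < fst c i} \<longleftrightarrow> i \<in> {0,1}"
      using ex3[of i] s unfolding c_def by auto
  qed
  hence ns: "\<not> standard_arrow c" unfolding standard_arrow_def by simp
  show ?thesis using ar ns nz by blast
qed

lemma interior:
  assumes c: "card (G \<beta> i j) > 2" and ij: "i \<noteq> j"
  shows "\<exists>m\<in>G \<beta> i j. m i \<ge> 1 \<and> m j \<ge> 1"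
proof (rule ccontr)
  assume "\<not> ?thesis"
  hence all: "\<forall>m\<in>G \<beta> i j. m i = 0 \<or> m j = 0" by auto
  have fin: "finite (G \<beta> i j)"
  proof (rule ccontr)
    assume "\<not> finite (G \<beta> i j)"
    hence "card (G \<beta> i j) = 0" by (rule card.infinite)
    thus False using c by simp
  qed
  define A where "A = {m\<in>G \<beta> i j. m i = 0}"
  define B where "B = {m\<in>G \<beta> i j. m j = 0}"
  have uni: "G \<beta> i j = A \<union> B" unfolding A_def B_def using all by blast
  have one: "\<forall>a\<in>{m\<in>G \<beta> i j. m l = 0}. \<forall>b\<in>{m\<in>G \<beta> i j. m l = 0}. a = b"
    if lij: "l = i \<or> l = j" for l
  proof (intro ballI)
    fix a b assume a: "a \<in> {m\<in>G \<beta> i j. m l = 0}" and b: "b \<in> {m\<in>G \<beta> i j. m l = 0}"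
    define ot where "ot = (if l = i then j else i)"
    have zero: "\<And>m t. m \<in> G \<beta> i j \<Longrightarrow> m l = 0 \<Longrightarrow> t \<noteq> ot \<Longrightarrow> m t = 0"
    proof -
      fix m t assume m: "m \<in> G \<beta> i j" "m l = 0" "t \<noteq> ot"
      have gz: "\<forall>k. k \<noteq> i \<and> k \<noteq> j \<longrightarrow> m k = 0" using m(1) unfolding G_def by simp
      show "m t = 0"
      proof (cases "t = l")
        case True then show ?thesis using m by simp
      next
        case False
        have "t \<noteq> i \<and> t \<noteq> j"
        proof (cases "l = i")
          case True thus ?thesis using False m(3) unfolding ot_def by simp
        next
          case F2: False
          hence "l = j" using lij by simp
          thus ?thesis using False F2 m(3) unfolding ot_def by simp
        qed
        then show ?thesis using gz by blast
      qed
    qed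
    have le: "a \<le> b" if "a ot \<le> b ot" "a \<in> G \<beta> i j" "b \<in> G \<beta> i j" "a l = 0" "b l = 0" for a b
    proof (unfold le_fun_def, rule allI)
      fix t show "a t \<le> b t"
      proof (cases "t = ot")
        case True thus ?thesis using that(1) by simp
      next
        case False
        have "a t = 0" by (rule zero[OF that(2) that(4) False])
        thus ?thesis by simp
      qed
    qed
    have mg: "m = m'" if "m \<in> G \<beta> i j" "m' \<in> G \<beta> i j" "m \<le> m'" for m m'
    proof (rule ccontr)
      assume ne: "m \<noteq> m'"
      have "m' \<in> min_gens \<beta>" "m \<in> min_gens \<beta>" using that unfolding G_def by simp_all
      hence h1: "\<forall>m''. m'' \<le> m' \<and> m'' \<noteq> m' \<longrightarrow> m'' \<in> \<beta>" and h2: "m \<notin> \<beta>" unfolding min_gens_def by simp_all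
      have "m \<in> \<beta>" using h1[rule_format, of m] that(3) ne by simp
      thus False using h2 by simp
    qed
    have aG: "a \<in> G \<beta> i j" "a l = 0" using a by simp_all
    have bG: "b \<in> G \<beta> i j" "b l = 0" using b by simp_all
    show "a = b"
    proof (cases "a ot \<le> b ot")
      case True
      have "a \<le> b" by (rule le[OF True aG(1) bG(1) aG(2) bG(2)])
      thus ?thesis by (rule mg[OF aG(1) bG(1)])
    next
      case False
      hence F: "b ot \<le> a ot" by simp
      have "b \<le> a" by (rule le[OF F bG(1) aG(1) bG(2) aG(2)])
      thus ?thesis by (rule mg[OF bG(1) aG(1), symmetric])
    qed
  qed
  have fA: "finite A" "finite B" using fin unfolding A_def B_def by simp_all
  have cA: "card A \<le> 1"
  proof -
    have "\<forall>x\<in>A. \<forall>y\<in>A. x = y" using one[of i] unfolding A_def by simp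
    thus ?thesis using card_le_Suc0_iff_eq[OF fA(1)] by simp
  qed
  have cB: "card B \<le> 1"
  proof -
    have "\<forall>x\<in>B. \<forall>y\<in>B. x = y" using one[of j] unfolding B_def by simp
    thus ?thesis using card_le_Suc0_iff_eq[OF fA(2)] by simp
  qed
  have "card (G \<beta> i j) \<le> card A + card B" unfolding uni by (rule card_Un_le)
  thus False using cA cB c by simp
qed

lemma gen_props:
  assumes "m \<in> G \<beta> i j" "m l \<ge> 1"
  shows "m \<notin> \<beta>" "m(l := m l - 1) \<in> \<beta>"
proof -
  have mg: "m \<in> min_gens \<beta>" using assms unfolding G_def by simp
  hence mg2: "m \<notin> \<beta>" "\<forall>m'. m' \<le> m \<and> m' \<noteq> m \<longrightarrow> m' \<in> \<beta>" unfolding min_gens_def by simp_all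
  thus "m \<notin> \<beta>" by simp
  have "m(l := m l - 1) \<le> m" unfolding le_fun_def by simp
  moreover have "m(l := m l - 1) \<noteq> m"
  proof
    assume "m(l := m l - 1) = m"
    hence "m l - 1 = m l" by (metis fun_upd_same)
    thus False using assms(2) by simp
  qed
  ultimately show "m(l := m l - 1) \<in> \<beta>" using mg2(2)[rule_format, of "m(l := m l - 1)"] by simp
qed

lemma upd_mk: "(mk x y z)(0 := v) = mk v y z" "(mk x y z)(1 := v) = mk x v z" "(mk x y z)(2 := v) = mk x y v"
proof -
  show "(mk x y z)(0 := v) = mk v y z" by (auto simp: mk_def fun_eq_iff)
  show "(mk x y z)(1 := v) = mk x v z" by (auto simp: mk_def fun_eq_iff)
  show "(mk x y z)(2 := v) = mk x y v"
  proof (rule ext)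
    fix i :: 3 show "((mk x y z)(2 := v)) i = mk x y v i" using ex3[of i] by (auto simp: mk_def)
  qed
qed

theorem lemma10p1:
  fixes \<beta> :: "mon set"
  assumes "basis_set \<beta>"
    and "\<forall>i j. i \<noteq> j \<longrightarrow> card (G \<beta> i j) > 2"
  shows "\<exists>c. is_arrow \<beta> c \<and> \<not> standard_arrow c \<and> \<not> trans_equiv_zero \<beta> c"
proof -
  have bs: "finite \<beta> \<and> \<beta> \<noteq> {} \<and> (\<forall>m\<in>\<beta>. \<forall>m'. m' \<le> m \<longrightarrow> m' \<in> \<beta>)"
    using assms(1) unfolding basis_set_def by simp
  have fb: "finite \<beta>" and ne: "\<beta> \<noteq> {}" using bs by simp_all
  have down: "m' \<in> \<beta>" if "m \<in> \<beta>" "m' \<le> m" for m m'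
    using bs that by simp
  have downmk: "mk x' y' z' \<in> \<beta>" if "mk x y z \<in> \<beta>" "x' \<le> x" "y' \<le> y" "z' \<le> z" for x y z x' y' z'
  proof -
    have "mk x' y' z' \<le> mk x y z" using that(2-4) by (simp add: mk_le)
    thus ?thesis using down[OF that(1)] by simp
  qed
  have n01: "(0::3) \<noteq> 1" "(0::3) \<noteq> 2" "(1::3) \<noteq> 2" by simp_all
  obtain m0 where m0: "m0 \<in> \<beta>" using ne by blast
  have "mk (m0 0) (m0 1) (m0 2) \<in> \<beta>" using m0 mk_eta[of m0] by simp
  hence b000: "mk 0 0 0 \<in> \<beta>" by (rule downmk) simp_all
  define Z where "Z = {z. mk 0 0 z \<in> \<beta>}"
  have fZ: "finite Z"
  proof -
    have "Z \<subseteq> (\<lambda>m. m 2) ` \<beta>"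
    proof
      fix z assume "z \<in> Z"
      hence "mk 0 0 z \<in> \<beta>" unfolding Z_def by simp
      thus "z \<in> (\<lambda>m. m 2) ` \<beta>" by (intro image_eqI[where x="mk 0 0 z"]) simp_all
    qed
    thus ?thesis using fb finite_subset by blast
  qed
  have Z0: "0 \<in> Z" unfolding Z_def using b000 by simp
  define C where "C = Max Z"
  have "C \<in> Z" unfolding C_def using fZ Z0 by (intro Max_in) auto
  hence CZ: "mk 0 0 C \<in> \<beta>" unfolding Z_def by simp
  have Zle: "z \<le> C" if "mk 0 0 z \<in> \<beta>" for z
  proof -
    have "z \<in> Z" unfolding Z_def using that by simp
    thus ?thesis unfolding C_def using fZ by simp
  qed
  have top: "\<forall>x y. mk x y (Suc C) \<notin> \<beta>"
  proof (intro allI notI)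
    fix x y assume "mk x y (Suc C) \<in> \<beta>"
    hence "mk 0 0 (Suc C) \<in> \<beta>" by (rule downmk) simp_all
    hence "Suc C \<le> C" by (rule Zle)
    thus False by simp
  qed
  define D where "D = {(x,y). mk x y C \<in> \<beta>}"
  define E where "E = {(x,y). mk x y 0 \<in> \<beta>}"
  have dD: "dn D" unfolding dn_def D_def using downmk by auto
  have dE: "dn E" unfolding dn_def E_def using downmk by auto
  have fD: "finite D"
  proof -
    have "D \<subseteq> (\<lambda>m. (m 0, m 1)) ` \<beta>"
    proof
      fix p assume "p \<in> D"
      then obtain x y where p: "p = (x,y)" "mk x y C \<in> \<beta>" unfolding D_def by auto
      show "p \<in> (\<lambda>m. (m 0, m 1)) ` \<beta>" using p by (intro image_eqI[where x="mk x y C"]) simp_all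
    qed
    thus ?thesis using fb finite_subset by blast
  qed
  have D0: "(0,0) \<in> D" unfolding D_def using CZ by simp
  obtain g where g: "g \<in> G \<beta> 0 1" "g 0 \<ge> 1" "g 1 \<ge> 1"
    using interior[of \<beta> 0 1] assms(2) n01 by blast
  have "g 2 = 0" using g(1) n01 unfolding G_def by simp
  hence gm: "g = mk (g 0) (g 1) 0" using mk_eta[of g] by simp
  have gE: "(g 0, g 1) \<notin> E" "(g 0 - 1, g 1) \<in> E" "(g 0, g 1 - 1) \<in> E"
  proof -
    have "g \<notin> \<beta>" by (rule gen_props(1)[OF g(1,2)])
    thus "(g 0, g 1) \<notin> E" using gm unfolding E_def by (metis case_prod_conv mem_Collect_eq)
    have "g(0 := g 0 - 1) \<in> \<beta>" by (rule gen_props(2)[OF g(1,2)])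
    hence "mk (g 0 - 1) (g 1) 0 \<in> \<beta>" using gm upd_mk(1) by metis
    thus "(g 0 - 1, g 1) \<in> E" unfolding E_def by simp
    have "g(1 := g 1 - 1) \<in> \<beta>" by (rule gen_props(2)[OF g(1,3)])
    hence "mk (g 0) (g 1 - 1) 0 \<in> \<beta>" using gm upd_mk(2) by metis
    thus "(g 0, g 1 - 1) \<in> E" unfolding E_def by simp
  qed
  obtain h where h: "h \<in> G \<beta> 0 2" "h 0 \<ge> 1" "h 2 \<ge> 1"
    using interior[of \<beta> 0 2] assms(2) n01 by blast
  have "h 1 = 0" using h(1) n01 unfolding G_def by simp
  hence hm: "h = mk (h 0) 0 (h 2)" using mk_eta[of h] by simp
  have hb1: "mk (h 0) 0 (h 2) \<notin> \<beta>" using gen_props(1)[OF h(1,2)] hm by simp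
  have "h(0 := h 0 - 1) \<in> \<beta>" by (rule gen_props(2)[OF h(1,2)])
  hence hb2: "mk (h 0 - 1) 0 (h 2) \<in> \<beta>" using hm upd_mk(1) by metis
  have "h(2 := h 2 - 1) \<in> \<beta>" by (rule gen_props(2)[OF h(1,3)])
  hence hb3: "mk (h 0) 0 (h 2 - 1) \<in> \<beta>" using hm upd_mk(3) by metis
  have axX: "\<forall>x. (x,0) \<in> D \<longrightarrow> (x+1,0) \<in> E"
  proof (intro allI impI)
    fix x assume "(x,0) \<in> D"
    hence xC: "mk x 0 C \<in> \<beta>" unfolding D_def by simp
    show "(x+1,0) \<in> E"
    proof (rule ccontr)
      assume "(x+1,0) \<notin> E"
      hence nx: "mk (x+1) 0 0 \<notin> \<beta>" unfolding E_def by simp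
      have "mk 0 0 (h 2) \<in> \<beta>" using hb2 by (rule downmk) simp_all
      hence cC: "h 2 \<le> C" by (rule Zle)
      have a0: "mk (h 0) 0 0 \<in> \<beta>" using hb3 by (rule downmk) simp_all
      have "h 0 \<le> x"
      proof (rule ccontr)
        assume "\<not> h 0 \<le> x"
        hence "mk (x+1) 0 0 \<in> \<beta>" using a0 by (intro downmk[OF a0]) simp_all
        thus False using nx by simp
      qed
      hence "mk (h 0) 0 (h 2) \<in> \<beta>" using cC by (intro downmk[OF xC]) simp_all
      thus False using hb1 by simp
    qed
  qed
  obtain w where w: "w \<in> G \<beta> 1 2" "w 1 \<ge> 1" "w 2 \<ge> 1"
    using interior[of \<beta> 1 2] assms(2) n01 by blast
  have "w 0 = 0" using w(1) n01 unfolding G_def by simp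
  hence wm: "w = mk 0 (w 1) (w 2)" using mk_eta[of w] by simp
  have wb1: "mk 0 (w 1) (w 2) \<notin> \<beta>" using gen_props(1)[OF w(1,2)] wm by simp
  have "w(1 := w 1 - 1) \<in> \<beta>" by (rule gen_props(2)[OF w(1,2)])
  hence wb2: "mk 0 (w 1 - 1) (w 2) \<in> \<beta>" using wm upd_mk(2) by metis
  have "w(2 := w 2 - 1) \<in> \<beta>" by (rule gen_props(2)[OF w(1,3)])
  hence wb3: "mk 0 (w 1) (w 2 - 1) \<in> \<beta>" using wm upd_mk(3) by metis
  have axY: "\<forall>y. (0,y) \<in> D \<longrightarrow> (0,y+1) \<in> E"
  proof (intro allI impI)
    fix y assume "(0,y) \<in> D"
    hence yC: "mk 0 y C \<in> \<beta>" unfolding D_def by simp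
    show "(0,y+1) \<in> E"
    proof (rule ccontr)
      assume "(0,y+1) \<notin> E"
      hence ny: "mk 0 (y+1) 0 \<notin> \<beta>" unfolding E_def by simp
      have "mk 0 0 (w 2) \<in> \<beta>" using wb2 by (rule downmk) simp_all
      hence cC: "w 2 \<le> C" by (rule Zle)
      have a0: "mk 0 (w 1) 0 \<in> \<beta>" using wb3 by (rule downmk) simp_all
      have "w 1 \<le> y"
      proof (rule ccontr)
        assume "\<not> w 1 \<le> y"
        hence "mk 0 (y+1) 0 \<in> \<beta>" by (intro downmk[OF a0]) simp_all
        thus False using ny by simp
      qed
      hence "mk 0 (w 1) (w 2) \<in> \<beta>" using cC by (intro downmk[OF yC]) simp_all
      thus False using wb1 by simp
    qed
  qed
  obtain s1 s2 k1 k2 u1 u2 where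
    r: "s1 \<ge> 1" "s2 \<ge> 1" "(u1,u2) \<in> D" "k1 \<le> u1" "k2 \<le> u2" "(u1+s1,u2+s2) \<notin> E"
    and R1: "\<forall>x y. (x,y) \<in> D \<longrightarrow> k2 \<le> y \<longrightarrow> x = k1 \<longrightarrow> (x+s1,y+s2) \<notin> E \<longrightarrow> (x+s1-1,y+s2) \<in> E"
    and R2: "\<forall>x y. (x,y) \<in> D \<longrightarrow> k1 \<le> x \<longrightarrow> y = k2 \<longrightarrow> (x+s1,y+s2) \<notin> E \<longrightarrow> (x+s1,y+s2-1) \<in> E"
    using two_d[OF dD dE fD D0 g(2) g(3) gE axY axX] by blast
  have u: "mk u1 u2 C \<in> \<beta>" "mk (u1+s1) (u2+s2) 0 \<notin> \<beta>" using r(3,6) unfolding D_def E_def by simp_all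
  have R1': "\<forall>x y. mk x y C \<in> \<beta> \<longrightarrow> k2 \<le> y \<longrightarrow> x = k1 \<longrightarrow> mk (x+s1) (y+s2) 0 \<notin> \<beta> \<longrightarrow> mk (x+s1-1) (y+s2) 0 \<in> \<beta>"
    using R1 unfolding D_def E_def by simp
  have R2': "\<forall>x y. mk x y C \<in> \<beta> \<longrightarrow> k1 \<le> x \<longrightarrow> y = k2 \<longrightarrow> mk (x+s1) (y+s2) 0 \<notin> \<beta> \<longrightarrow> mk (x+s1) (y+s2-1) 0 \<in> \<beta>"
    using R2 unfolding D_def E_def by simp
  show ?thesis by (rule three_d[OF assms(1) top r(1,2) u(1) r(4,5) u(2) R1' R2'])
qed

end
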